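(* Let $K$ be a field, $s\ge2$, $S=K[t_1,\ldots,t_s]$ with each $t_i$ of degree $1$, and let $\mathcal{L}\subset\mathbb{Z}^s$ be a lattice such that $I(\mathcal{L})$ is a graded ideal with $\dim S/I(\mathcal{L})=1$. Then $\mathbb{Z}^s/\mathcal{L}$ is torsion-free if and only if $I(\mathcal{L})=(t_1-t_s,\ldots,t_{s-1}-t_s)$.
   Context: A lattice is a subgroup of $\mathbb{Z}^s$. For $a\in\mathbb{Z}^s$ write $a=a^+-a^-$ with $a^+,a^-\in\mathbb{N}^s$ of disjoint supports, $t^c=t_1^{c_1}\cdots t_s^{c_s}$; $I(\mathcal{L})=(\{t^{a^+}-t^{a^-}:a\in\mathcal{L}\})$. Graded means generated by homogeneous polynomials; $\dim$ is Krull dimension. *)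

theory Defs
  imports "HOL-Library.Poly_Mapping" "HOL-Library.Cardinality"
begin

text \<open>Polynomial ring K[t_i : i in 'n] over a field, variables indexed by a finite type 'n
  (so s = CARD('n)).\<close>

type_synonym ('n, 'k) mpoly = "('n \<Rightarrow>\<^sub>0 nat) \<Rightarrow>\<^sub>0 'k"

definition var :: "'n \<Rightarrow> ('n, 'k::comm_ring_1) mpoly" where
  "var i = Poly_Mapping.single (Poly_Mapping.single i 1) 1"

definition monom_of :: "('n::finite \<Rightarrow> nat) \<Rightarrow> ('n, 'k::comm_ring_1) mpoly" where
  "monom_of c = Poly_Mapping.single (Abs_poly_mapping c) 1"

definition pos_part :: "('n \<Rightarrow> int) \<Rightarrow> 'n \<Rightarrow> nat" where
  "pos_part a = (\<lambda>i. nat (a i))"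
definition neg_part :: "('n \<Rightarrow> int) \<Rightarrow> 'n \<Rightarrow> nat" where
  "neg_part a = (\<lambda>i. nat (- a i))"

definition is_lattice :: "('n \<Rightarrow> int) set \<Rightarrow> bool" where
  "is_lattice L \<longleftrightarrow> (\<lambda>_. 0) \<in> L \<and> (\<forall>a\<in>L. \<forall>b\<in>L. (\<lambda>i. a i + b i) \<in> L)
     \<and> (\<forall>a\<in>L. (\<lambda>i. - a i) \<in> L)"

definition is_ideal :: "'a::comm_ring_1 set \<Rightarrow> bool" where
  "is_ideal I \<longleftrightarrow> 0 \<in> I \<and> (\<forall>a\<in>I. \<forall>b\<in>I. a + b \<in> I) \<and> (\<forall>r. \<forall>a\<in>I. r * a \<in> I)"

definition ideal_gen :: "'a::comm_ring_1 set \<Rightarrow> 'a set" where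
  "ideal_gen G = \<Inter>{J. is_ideal J \<and> G \<subseteq> J}"

definition prime_ideal :: "'a::comm_ring_1 set \<Rightarrow> bool" where
  "prime_ideal P \<longleftrightarrow> is_ideal P \<and> 1 \<notin> P \<and> (\<forall>a b. a * b \<in> P \<longrightarrow> a \<in> P \<or> b \<in> P)"

definition lattice_ideal :: "('n::finite \<Rightarrow> int) set \<Rightarrow> ('n, 'k::comm_ring_1) mpoly set" where
  "lattice_ideal L = ideal_gen {monom_of (pos_part a) - monom_of (neg_part a) | a. a \<in> L}"

definition tdeg :: "('n::finite \<Rightarrow>\<^sub>0 nat) \<Rightarrow> nat" where
  "tdeg m = (\<Sum>i\<in>UNIV. Poly_Mapping.lookup m i)"

definition homogeneous :: "('n::finite, 'k::comm_ring_1) mpoly \<Rightarrow> bool" where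
  "homogeneous f \<longleftrightarrow> (\<exists>d. \<forall>m\<in>Poly_Mapping.keys f. tdeg m = d)"

definition graded_ideal :: "('n::finite, 'k::comm_ring_1) mpoly set \<Rightarrow> bool" where
  "graded_ideal I \<longleftrightarrow> (\<exists>G. (\<forall>g\<in>G. homogeneous g) \<and> I = ideal_gen G)"

text \<open>Krull dimension of R/I: supremum of lengths n of chains P_0 < P_1 < ... < P_n of prime
  ideals of R/I, i.e. of prime ideals of R containing I. "dim R/I = n" (n finite) means a chain of
  length n exists and no chain of length n+1 exists.\<close>
definition prime_chain_over :: "'a::comm_ring_1 set \<Rightarrow> nat \<Rightarrow> bool" where
  "prime_chain_over I n \<longleftrightarrow> (\<exists>P :: nat \<Rightarrow> 'a set.
      (\<forall>j\<le>n. prime_ideal (P j) \<and> I \<subseteq> P j) \<and> (\<forall>j<n. P j \<subset> P (Suc j)))"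

definition krull_dim_quot_eq :: "'a::comm_ring_1 set \<Rightarrow> nat \<Rightarrow> bool" where
  "krull_dim_quot_eq I n \<longleftrightarrow> prime_chain_over I n \<and> \<not> prime_chain_over I (Suc n)"

definition torsion_free_quot :: "('n \<Rightarrow> int) set \<Rightarrow> bool" where
  "torsion_free_quot L \<longleftrightarrow> (\<forall>a. \<forall>k::int. k \<noteq> 0 \<and> (\<lambda>i. k * a i) \<in> L \<longrightarrow> a \<in> L)"

end

theory Submission
  imports Defs "HOL-Library.Function_Algebras" "HOL-Computational_Algebra.Polynomial"
begin


lemma mp_induct[case_names zero add]:
  assumes "P 0" "\<And>a b f. P f \<Longrightarrow> P (Poly_Mapping.single a b + f)"
  shows "P f"
proof (induction f rule: update_induct)
  case const then show ?case using assms(1) .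
next
  case (update f a b)
  have "Poly_Mapping.update a b f = Poly_Mapping.single a b + f"
    using update(1) by (intro poly_mapping_eqI) (auto simp: lookup_update lookup_add lookup_single in_keys_iff)
  then show ?case using assms(2)[OF update(3)] by simp
qed

definition lin :: "('a \<Rightarrow> 'b::zero \<Rightarrow> 'c::comm_monoid_add) \<Rightarrow> ('a \<Rightarrow>\<^sub>0 'b) \<Rightarrow> 'c" where
  "lin G f = (\<Sum>k\<in>Poly_Mapping.keys f. G k (Poly_Mapping.lookup f k))"

lemma lin_zero[simp]: "lin G 0 = 0" by (simp add: lin_def)

lemma lin_add:
  assumes "\<And>k. G k 0 = 0" "\<And>k x y. G k (x + y) = G k x + G k y"
  shows "lin G (p + q) = lin G p + lin G q"
  unfolding lin_def by (rule setsum_keys_plus_distrib) (use assms in auto)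

lemma lin_single:
  assumes "\<And>k. G k 0 = 0"
  shows "lin G (Poly_Mapping.single k v) = G k v"
  using assms by (simp add: lin_def)

lemma lin_diff:
  fixes G :: "'a \<Rightarrow> 'b::ab_group_add \<Rightarrow> 'c::ab_group_add"
  assumes "\<And>k. G k 0 = 0" "\<And>k x y. G k (x + y) = G k x + G k y"
  shows "lin G (p - q) = lin G p - lin G q"
proof -
  have "lin G p = lin G ((p - q) + q)" by simp
  also have "\<dots> = lin G (p - q) + lin G q" by (rule lin_add[OF assms])
  finally show ?thesis by simp
qed



lemma ideal_gen_sup: "G \<subseteq> ideal_gen G"
  unfolding ideal_gen_def by auto

lemma ideal_gen_min: "is_ideal J \<Longrightarrow> G \<subseteq> J \<Longrightarrow> ideal_gen G \<subseteq> J"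
  unfolding ideal_gen_def by auto

lemma ideal_gen_ideal: "is_ideal (ideal_gen G)"
  unfolding ideal_gen_def is_ideal_def by auto

lemma ideal_diff: "is_ideal I \<Longrightarrow> a \<in> I \<Longrightarrow> b \<in> I \<Longrightarrow> (a::'a::comm_ring_1) - b \<in> I"
  unfolding is_ideal_def by (metis diff_conv_add_uminus mult_minus1)

lemma ideal_mult: "is_ideal I \<Longrightarrow> a \<in> I \<Longrightarrow> r * a \<in> I"
  unfolding is_ideal_def by auto

lemma ideal_add: "is_ideal I \<Longrightarrow> a \<in> I \<Longrightarrow> b \<in> I \<Longrightarrow> a + b \<in> I"
  unfolding is_ideal_def by auto

lemma ideal_zero: "is_ideal I \<Longrightarrow> 0 \<in> I"
  unfolding is_ideal_def by auto

definition dif :: "('n \<Rightarrow>\<^sub>0 nat) \<Rightarrow> ('n \<Rightarrow> int) \<Rightarrow> 'n \<Rightarrow> int" where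
  "dif u c = (\<lambda>i. int (Poly_Mapping.lookup u i) - c i)"

definition Sc :: "('n \<Rightarrow> int) set \<Rightarrow> ('n \<Rightarrow> int) \<Rightarrow> (('n \<Rightarrow>\<^sub>0 nat) \<Rightarrow>\<^sub>0 'k::comm_ring_1) \<Rightarrow> 'k" where
  "Sc M c f = lin (\<lambda>u x. if dif u c \<in> M then x else 0) f"

definition JM :: "('n \<Rightarrow> int) set \<Rightarrow> (('n \<Rightarrow>\<^sub>0 nat) \<Rightarrow>\<^sub>0 'k::comm_ring_1) set" where
  "JM M = {f. \<forall>c. Sc M c f = 0}"

lemma Sc_add: "Sc M c (p + q) = Sc M c p + Sc M c q"
  unfolding Sc_def by (rule lin_add) auto

lemma Sc_diff: "Sc M c (p - q) = Sc M c p - Sc M c q"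
  unfolding Sc_def by (rule lin_diff) auto

lemma Sc_single: "Sc M c (Poly_Mapping.single u x) = (if dif u c \<in> M then x else 0)"
  unfolding Sc_def by (rule lin_single) auto

lemma Sc_zero[simp]: "Sc M c 0 = 0"
  unfolding Sc_def by simp

lemma Sc_mult_single:
  "Sc M c (Poly_Mapping.single v a * f) = a * Sc M (\<lambda>i. c i - int (Poly_Mapping.lookup v i)) f"
proof (induction f arbitrary: c rule: mp_induct)
  case zero then show ?case by simp
next
  case (add u b f)
  have d: "dif (v + u) c = dif u (\<lambda>i. c i - int (Poly_Mapping.lookup v i))"
    by (auto simp: dif_def lookup_add)
  show ?case
    by (simp add: distrib_left Sc_add add mult_single Sc_single d)
qed

lemma JM_ideal: "is_ideal (JM M :: (('n \<Rightarrow>\<^sub>0 nat) \<Rightarrow>\<^sub>0 'k::comm_ring_1) set)"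
  unfolding is_ideal_def
proof (intro conjI ballI allI)
  show "0 \<in> JM M" by (simp add: JM_def)
  fix a b :: "('n \<Rightarrow>\<^sub>0 nat) \<Rightarrow>\<^sub>0 'k" assume "a \<in> JM M" "b \<in> JM M"
  then show "a + b \<in> JM M" by (simp add: JM_def Sc_add)
next
  fix r a :: "('n \<Rightarrow>\<^sub>0 nat) \<Rightarrow>\<^sub>0 'k" assume a: "a \<in> JM M"
  show "r * a \<in> JM M"
  proof (induction r rule: mp_induct)
    case zero then show ?case by (simp add: JM_def)
  next
    case (add u b f)
    then show ?case using a by (simp add: JM_def distrib_right Sc_add Sc_mult_single)
  qed
qed



lemma lat_zero: "is_lattice M \<Longrightarrow> (\<lambda>_. 0) \<in> M" unfolding is_lattice_def by auto
lemma lat_add: "is_lattice M \<Longrightarrow> x \<in> M \<Longrightarrow> y \<in> M \<Longrightarrow> (\<lambda>i. x i + y i) \<in> M"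
  unfolding is_lattice_def by auto
lemma lat_neg: "is_lattice M \<Longrightarrow> x \<in> M \<Longrightarrow> (\<lambda>i. - x i) \<in> M"
  unfolding is_lattice_def by auto
lemma lat_neg_iff: "is_lattice M \<Longrightarrow> (\<lambda>i. - x i) \<in> M \<longleftrightarrow> x \<in> M"
  using lat_neg[of M "\<lambda>i. - x i"] lat_neg[of M x] by auto
lemma lat_shift: "is_lattice M \<Longrightarrow> a \<in> M \<Longrightarrow> (\<lambda>i. x i + a i) \<in> M \<longleftrightarrow> x \<in> M"
  using lat_add[of M "\<lambda>i. x i + a i" "\<lambda>i. - a i"] lat_add[of M x a] lat_neg[of M a] by auto

lemma lat_smult_nat: "is_lattice M \<Longrightarrow> a \<in> M \<Longrightarrow> (\<lambda>i. int k * a i) \<in> M"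
proof (induction k)
  case 0 then show ?case using lat_zero by auto
next
  case (Suc k)
  then have "(\<lambda>i. int k * a i + a i) \<in> M" using lat_add by blast
  then show ?case by (simp add: algebra_simps)
qed

lemma lat_smult: "is_lattice M \<Longrightarrow> a \<in> M \<Longrightarrow> (\<lambda>i. k * a i) \<in> M"
proof (cases "k \<ge> 0")
  case True
  then show "is_lattice M \<Longrightarrow> a \<in> M \<Longrightarrow> ?thesis" using lat_smult_nat[of M a "nat k"] by simp
next
  case False
  assume "is_lattice M" "a \<in> M"
  then have "(\<lambda>i. - (int (nat (-k)) * a i)) \<in> M" using lat_smult_nat lat_neg by blast
  then show ?thesis using False by simp
qed

lemma lat_sum: assumes M: "is_lattice M" and "finite A" and "\<And>j. j \<in> A \<Longrightarrow> f j \<in> M"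
  shows "(\<lambda>i. \<Sum>j\<in>A. f j i) \<in> M"
  using assms(2,3) proof (induction A rule: finite_induct)
  case empty then show ?case using lat_zero[OF M] by simp
next
  case (insert x F)
  then have "(\<lambda>i. f x i + (\<Sum>j\<in>F. f j i)) \<in> M" using lat_add[OF M, of "f x"] by auto
  then show ?case using insert by simp
qed

definition gen :: "('n::finite \<Rightarrow> int) \<Rightarrow> ('n, 'k::comm_ring_1) mpoly" where
  "gen a = monom_of (pos_part a) - monom_of (neg_part a)"

lemma lattice_ideal_gen: "lattice_ideal L = ideal_gen (gen ` L)"
  unfolding lattice_ideal_def gen_def by (simp add: image_def Setcompr_eq_image)

lemma lookup_Abs_fin[simp]: "Poly_Mapping.lookup (Abs_poly_mapping (u::'n::finite \<Rightarrow> 'b::zero)) = u"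
  by simp

lemma Sc_monom: "Sc M c (monom_of u) = (if (\<lambda>i. int (u i) - c i) \<in> M then 1 else 0)"
  unfolding monom_of_def Sc_single dif_def by simp

lemma crit:
  assumes M: "is_lattice M" and g: "(gen a :: ('n::finite, 'k::comm_ring_1) mpoly) \<in> JM M"
  shows "a \<in> M"
proof (rule ccontr)
  assume a: "a \<notin> M"
  define c where "c = (\<lambda>i. int (pos_part a i))"
  have "Sc M c (gen a :: ('n, 'k) mpoly) = 0" using g by (simp add: JM_def)
  moreover have "(\<lambda>i. int (pos_part a i) - c i) = (\<lambda>_. 0)" by (simp add: c_def)
  moreover have "(\<lambda>i. int (neg_part a i) - c i) = (\<lambda>i. - a i)"
    by (auto simp: c_def pos_part_def neg_part_def)
  ultimately have "(1::'k) - (if (\<lambda>i. - a i) \<in> M then 1 else 0) = 0"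
    using lat_zero[OF M] by (simp add: gen_def Sc_diff Sc_monom)
  then have "(\<lambda>i. - a i) \<in> M" by (auto split: if_splits)
  then show False using a lat_neg_iff[OF M] by blast
qed

lemma gen_JM:
  assumes M: "is_lattice M" and a: "a \<in> M"
  shows "(gen a :: ('n::finite, 'k::comm_ring_1) mpoly) \<in> JM M"
proof -
  have "Sc M c (gen a :: ('n, 'k) mpoly) = 0" for c
  proof -
    have e: "(\<lambda>i. int (pos_part a i) - c i) = (\<lambda>i. (int (neg_part a i) - c i) + a i)"
      by (auto simp: pos_part_def neg_part_def)
    show ?thesis unfolding gen_def Sc_diff Sc_monom e lat_shift[OF M a] by simp
  qed
  then show ?thesis by (simp add: JM_def)
qed

lemma lattice_ideal_JM:
  assumes "is_lattice L"
  shows "(lattice_ideal L :: ('n::finite, 'k::comm_ring_1) mpoly set) \<subseteq> JM L"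
  unfolding lattice_ideal_gen by (rule ideal_gen_min[OF JM_ideal]) (use gen_JM[OF assms] in auto)

lemma gen_in_lattice_ideal: "a \<in> L \<Longrightarrow> gen a \<in> lattice_ideal L"
  unfolding lattice_ideal_gen using ideal_gen_sup by blast

lemma gen_in_iff:
  assumes "is_lattice L"
  shows "(gen a :: ('n::finite, 'k::comm_ring_1) mpoly) \<in> lattice_ideal L \<longleftrightarrow> a \<in> L"
  using crit[OF assms] lattice_ideal_JM[OF assms] gen_in_lattice_ideal by blast



definition HH :: "('n::finite \<Rightarrow> int) set" where "HH = {a. (\<Sum>i\<in>UNIV. a i) = 0}"

definition Jv :: "'n \<Rightarrow> ('n::finite, 'k::comm_ring_1) mpoly set" where
  "Jv s = ideal_gen {var i - var s | i. i \<noteq> s}"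

definition ee :: "'n \<Rightarrow> 'n \<Rightarrow> 'n \<Rightarrow> int" where
  "ee i s = (\<lambda>j. if j = i then 1 else if j = s then -1 else 0)"


lemma HH_lattice: "is_lattice HH"
  unfolding is_lattice_def HH_def by (auto simp: sum.distrib sum_negf)



lemma ee_HH: "i \<noteq> s \<Longrightarrow> ee i s \<in> HH"
proof -
  assume "i \<noteq> s"
  have "(\<Sum>j\<in>UNIV. ee i s j) = (\<Sum>j\<in>UNIV. (if j = i then 1 else 0) - (if j = s then 1 else 0))"
    by (rule sum.cong) (auto simp: ee_def \<open>i \<noteq> s\<close>)
  also have "\<dots> = 0" by (simp add: sum_subtractf)
  finally show ?thesis by (simp add: HH_def)
qed

lemma Abs_delta: "Abs_poly_mapping (\<lambda>j. if j = i then 1 else 0) = Poly_Mapping.single i (1::nat)"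
  by (rule poly_mapping_eqI) (auto simp: lookup_single when_def)

lemma var_gen: "i \<noteq> s \<Longrightarrow> (var i - var s :: ('n::finite, 'k::comm_ring_1) mpoly) = gen (ee i s)"
proof -
  assume "i \<noteq> s"
  have p: "pos_part (ee i s) = (\<lambda>j. if j = i then 1 else 0)"
    by (auto simp: pos_part_def ee_def)
  have n: "neg_part (ee i s) = (\<lambda>j. if j = s then 1 else 0)"
    using \<open>i \<noteq> s\<close> by (auto simp: neg_part_def ee_def)
  show ?thesis unfolding gen_def p n monom_of_def Abs_delta var_def ..
qed

lemma HH_sub:
  assumes L: "is_lattice L" and e: "\<And>i. i \<noteq> s \<Longrightarrow> ee i s \<in> L"
  shows "HH \<subseteq> L"
proof
  fix a :: "'a \<Rightarrow> int" assume a: "a \<in> HH"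
  have "(\<lambda>j. \<Sum>i\<in>UNIV - {s}. a i * ee i s j) \<in> L"
    by (rule lat_sum[OF L]) (auto intro: lat_smult[OF L] e)
  moreover have "(\<lambda>j. \<Sum>i\<in>UNIV - {s}. a i * ee i s j) = a"
  proof
    fix j
    show "(\<Sum>i\<in>UNIV - {s}. a i * ee i s j) = a j"
    proof (cases "j = s")
      case True
      have "(\<Sum>i\<in>UNIV - {s}. a i * ee i s j) = (\<Sum>i\<in>UNIV - {s}. - a i)"
        by (rule sum.cong) (auto simp: ee_def True)
      also have "\<dots> = - (\<Sum>i\<in>UNIV - {s}. a i)" by (simp add: sum_negf)
      moreover have "(\<Sum>i\<in>UNIV. a i) = a s + (\<Sum>i\<in>UNIV - {s}. a i)"
        by (simp add: sum.remove)
      ultimately show ?thesis using a True by (simp add: HH_def)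
    next
      case False
      have "(\<Sum>i\<in>UNIV - {s}. a i * ee i s j) = (\<Sum>i\<in>UNIV - {s}. if i = j then a j else 0)"
        by (rule sum.cong) (auto simp: ee_def False)
      also have "\<dots> = a j" using False by simp
      finally show ?thesis .
    qed
  qed
  ultimately show "a \<in> L" by simp
qed



lemma Jv_ideal: "is_ideal (Jv s)"
  unfolding Jv_def by (rule ideal_gen_ideal)

lemma var_diff_Jv: "(var i - var s :: ('n::finite, 'k::comm_ring_1) mpoly) \<in> Jv s"
proof (cases "i = s")
  case True then show ?thesis using ideal_zero[OF Jv_ideal, of s] by simp
next
  case False
  then have "(var i - var s :: ('n, 'k) mpoly) \<in> {var i - var s | i. i \<noteq> s}" by blast
  then show ?thesis unfolding Jv_def by (rule ideal_gen_sup[THEN subsetD])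
qed

lemma mon_Jv_aux:
  "(\<Sum>i\<in>UNIV. u i) = n \<Longrightarrow> (monom_of u :: ('n::finite, 'k::comm_ring_1) mpoly) - var s ^ n \<in> Jv s"
proof (induction n arbitrary: u)
  case 0
  then have "u = (\<lambda>_. 0)" by auto
  then show ?case using ideal_zero[OF Jv_ideal] by (simp add: monom_of_def)
next
  case (Suc n)
  then obtain i where i: "u i > 0"
    using Suc.prems by (metis (mono_tags) gr0I sum.neutral Suc_neq_Zero)
  define u' where "u' = u(i := u i - 1)"
  have su: "(\<Sum>j\<in>UNIV. u j) = u i + (\<Sum>j\<in>UNIV - {i}. u j)" by (simp add: sum.remove)
  have su': "(\<Sum>j\<in>UNIV. u' j) = u' i + (\<Sum>j\<in>UNIV - {i}. u' j)" by (simp add: sum.remove)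
  have "(\<Sum>j\<in>UNIV - {i}. u' j) = (\<Sum>j\<in>UNIV - {i}. u j)" by (rule sum.cong) (auto simp: u'_def)
  then have n: "(\<Sum>j\<in>UNIV. u' j) = n" using su su' Suc.prems i by (simp add: u'_def)
  have ab: "Poly_Mapping.single i 1 + Abs_poly_mapping u' = Abs_poly_mapping u"
    by (rule poly_mapping_eqI) (use i in \<open>auto simp: lookup_add lookup_single when_def u'_def\<close>)
  have m: "(monom_of u :: ('n, 'k) mpoly) = var i * monom_of u'"
    unfolding monom_of_def var_def mult_single ab by simp
  have "(monom_of u :: ('n, 'k) mpoly) - var s ^ Suc n
      = var i * (monom_of u' - var s ^ n) + var s ^ n * (var i - var s)"
    unfolding m by (simp add: algebra_simps)
  moreover have "(var i * (monom_of u' - var s ^ n) :: ('n, 'k) mpoly) \<in> Jv s"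
    by (rule ideal_mult[OF Jv_ideal Suc.IH[OF n]])
  moreover have "(var s ^ n * (var i - var s) :: ('n, 'k) mpoly) \<in> Jv s"
    by (rule ideal_mult[OF Jv_ideal var_diff_Jv])
  ultimately show ?case using ideal_add[OF Jv_ideal] by simp
qed

lemma gen_HH_Jv:
  assumes "a \<in> HH"
  shows "(gen a :: ('n::finite, 'k::comm_ring_1) mpoly) \<in> Jv s"
proof -
  have e1: "(\<Sum>i\<in>UNIV. int (pos_part a i)) - (\<Sum>i\<in>UNIV. int (neg_part a i)) = (\<Sum>i\<in>UNIV. a i)"
    by (simp add: sum_subtractf[symmetric] pos_part_def neg_part_def) (rule sum.cong, auto)
  have "int (\<Sum>i\<in>UNIV. pos_part a i) = int (\<Sum>i\<in>UNIV. neg_part a i)"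
    using e1 assms by (simp add: HH_def of_nat_sum)
  then have d: "(\<Sum>i\<in>UNIV. pos_part a i) = (\<Sum>i\<in>UNIV. neg_part a i)"
    by (simp only: of_nat_eq_iff)
  define d where "d = (\<Sum>i\<in>UNIV. neg_part a i)"
  have "((monom_of (pos_part a) - var s ^ d) - (monom_of (neg_part a) - var s ^ d) :: ('n, 'k) mpoly) \<in> Jv s"
    by (rule ideal_diff[OF Jv_ideal mon_Jv_aux mon_Jv_aux]) (use d in \<open>simp_all add: d_def\<close>)
  then show ?thesis by (simp add: gen_def)
qed

lemma lattice_ideal_HH: "(lattice_ideal HH :: ('n::finite, 'k::comm_ring_1) mpoly set) = Jv s"
proof
  show "(lattice_ideal HH :: ('n, 'k) mpoly set) \<subseteq> Jv s"
    unfolding lattice_ideal_gen by (rule ideal_gen_min[OF Jv_ideal]) (auto intro: gen_HH_Jv)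
  show "Jv s \<subseteq> (lattice_ideal HH :: ('n, 'k) mpoly set)"
    unfolding Jv_def lattice_ideal_gen
    by (rule ideal_gen_min[OF ideal_gen_ideal]) (auto simp: var_gen ee_HH intro!: ideal_gen_sup[THEN subsetD])
qed

lemma dir2:
  assumes L: "is_lattice L" and eq: "(lattice_ideal L :: ('n::finite, 'k::comm_ring_1) mpoly set) = Jv s"
  shows "torsion_free_quot L"
proof -
  have JH: "(Jv s :: ('n, 'k) mpoly set) \<subseteq> JM HH"
    unfolding Jv_def by (rule ideal_gen_min[OF JM_ideal]) (auto simp: var_gen ee_HH intro!: gen_JM HH_lattice)
  have LH: "L \<subseteq> HH"
  proof
    fix a assume "a \<in> L"
    then have "(gen a :: ('n, 'k) mpoly) \<in> JM HH" using gen_in_lattice_ideal eq JH by blast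
    then show "a \<in> HH" using crit[OF HH_lattice] by blast
  qed
  have "ee i s \<in> L" if "i \<noteq> s" for i
  proof -
    have "(gen (ee i s) :: ('n, 'k) mpoly) \<in> Jv s"
      using var_gen[OF that] var_diff_Jv by metis
    then show ?thesis using gen_in_iff[OF L] eq by blast
  qed
  then have HL: "HH \<subseteq> L" using HH_sub[OF L] by blast
  show ?thesis unfolding torsion_free_quot_def
  proof (intro allI impI)
    fix a :: "'n \<Rightarrow> int" and k :: int assume "k \<noteq> 0 \<and> (\<lambda>i. k * a i) \<in> L"
    then have "k * (\<Sum>i\<in>UNIV. a i) = 0" "k \<noteq> 0" using LH by (auto simp: HH_def sum_distrib_left)
    then show "a \<in> L" using HL by (auto simp: HH_def)
  qed
qed



lemma lat_diff: "is_lattice M \<Longrightarrow> x \<in> M \<Longrightarrow> y \<in> M \<Longrightarrow> (\<lambda>i. x i - y i) \<in> M"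
  using lat_add[of M x "\<lambda>i. - y i"] lat_neg[of M y] by simp

lemma lat_inter: "is_lattice M \<Longrightarrow> is_lattice N \<Longrightarrow> is_lattice (M \<inter> N)"
  unfolding is_lattice_def by auto

lemma homog_JM:
  assumes L: "is_lattice L" and g: "(g :: ('n::finite, 'k::comm_ring_1) mpoly) \<in> JM L"
    and h: "homogeneous g"
  shows "g \<in> JM (L \<inter> HH)"
proof -
  obtain d where d: "\<And>m. m \<in> Poly_Mapping.keys g \<Longrightarrow> tdeg m = d" using h unfolding homogeneous_def by blast
  have L': "is_lattice (L \<inter> HH)" by (rule lat_inter[OF L HH_lattice])
  have "Sc (L \<inter> HH) c g = 0" for c
  proof (cases "\<exists>u0\<in>Poly_Mapping.keys g. dif u0 c \<in> L \<inter> HH")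
    case True
    then obtain u0 where u0: "u0 \<in> Poly_Mapping.keys g" "dif u0 c \<in> L \<inter> HH" by blast
    define c0 where "c0 = (\<lambda>i. int (Poly_Mapping.lookup u0 i))"
    have eq: "dif u c \<in> L \<inter> HH \<longleftrightarrow> dif u c0 \<in> L" if u: "u \<in> Poly_Mapping.keys g" for u
    proof
      have e: "dif u c0 = (\<lambda>i. dif u c i - dif u0 c i)" by (auto simp: dif_def c0_def)
      assume "dif u c \<in> L \<inter> HH"
      then show "dif u c0 \<in> L" unfolding e using lat_diff[OF L] u0 by blast
    next
      assume a: "dif u c0 \<in> L"
      have "int (tdeg u) = int (tdeg u0)" using d u u0(1) by simp
      then have "(\<Sum>i\<in>UNIV. dif u c0 i) = 0"
        by (simp add: tdeg_def of_nat_sum dif_def c0_def sum_subtractf)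
      then have "dif u c0 \<in> L \<inter> HH" using a by (simp add: HH_def)
      moreover have "dif u c = (\<lambda>i. dif u c0 i + dif u0 c i)" by (auto simp: dif_def c0_def)
      ultimately show "dif u c \<in> L \<inter> HH" using lat_add[OF L'] u0 by metis
    qed
    have "Sc (L \<inter> HH) c g = Sc L c0 g"
      unfolding Sc_def lin_def by (rule sum.cong) (use eq in auto)
    then show ?thesis using g by (simp add: JM_def)
  next
    case False
    then show ?thesis unfolding Sc_def lin_def by (intro sum.neutral) auto
  qed
  then show ?thesis by (simp add: JM_def)
qed

lemma graded_sub:
  assumes L: "is_lattice L" and gr: "graded_ideal (lattice_ideal L :: ('n::finite, 'k::comm_ring_1) mpoly set)"
  shows "L \<subseteq> HH"
proof
  obtain G where G: "\<And>g. g \<in> G \<Longrightarrow> homogeneous g" and IG: "(lattice_ideal L :: ('n, 'k) mpoly set) = ideal_gen G"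
    using gr unfolding graded_ideal_def by blast
  have "G \<subseteq> JM (L \<inter> HH)"
  proof
    fix g assume "g \<in> G"
    then have "g \<in> JM L" "homogeneous g" using IG ideal_gen_sup lattice_ideal_JM[OF L] G by blast+
    then show "g \<in> JM (L \<inter> HH)" using homog_JM[OF L] by blast
  qed
  then have sub: "(lattice_ideal L :: ('n, 'k) mpoly set) \<subseteq> JM (L \<inter> HH)"
    unfolding IG by (rule ideal_gen_min[OF JM_ideal])
  fix a assume "a \<in> L"
  then have "(gen a :: ('n, 'k) mpoly) \<in> JM (L \<inter> HH)" using gen_in_lattice_ideal sub by blast
  then have "a \<in> L \<inter> HH" by (rule crit[OF lat_inter[OF L HH_lattice]])
  then show "a \<in> HH" by simp
qed



definition hom :: "('a::comm_ring_1 \<Rightarrow> 'b::comm_ring_1) \<Rightarrow> bool" where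
  "hom \<phi> \<longleftrightarrow> (\<forall>x y. \<phi> (x + y) = \<phi> x + \<phi> y) \<and> (\<forall>x y. \<phi> (x * y) = \<phi> x * \<phi> y) \<and> \<phi> 1 = 1"

lemma hom_add: "hom \<phi> \<Longrightarrow> \<phi> (x + y) = \<phi> x + \<phi> y" unfolding hom_def by blast
lemma hom_mult: "hom \<phi> \<Longrightarrow> \<phi> (x * y) = \<phi> x * \<phi> y" unfolding hom_def by blast
lemma hom_one: "hom \<phi> \<Longrightarrow> \<phi> 1 = 1" unfolding hom_def by blast
lemma hom_zero: "hom \<phi> \<Longrightarrow> \<phi> 0 = 0"
  using hom_add[of \<phi> 0 0] by simp
lemma hom_power: "hom \<phi> \<Longrightarrow> \<phi> (x ^ n) = \<phi> x ^ n"
  by (induction n) (simp_all add: hom_one hom_mult)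
lemma hom_prod: "hom \<phi> \<Longrightarrow> \<phi> (prod f A) = (\<Prod>a\<in>A. \<phi> (f a))"
proof (induction A rule: infinite_finite_induct)
  case (infinite A) then show ?case by (simp add: hom_one)
next
  case empty then show ?case by (simp add: hom_one)
next
  case (insert x F) then show ?case by (simp add: hom_mult)
qed
lemma hom_comp: "hom \<sigma> \<Longrightarrow> hom \<phi> \<Longrightarrow> hom (\<sigma> \<circ> \<phi>)"
  unfolding hom_def by simp

lemma hom_const: "hom (\<lambda>c. [:c:] :: 'a::comm_ring_1 poly)"
  unfolding hom_def by simp
lemma hom_poly: "hom (\<lambda>p. poly p (x::'a::comm_ring_1))"
  unfolding hom_def by simp

definition ev :: "('k::comm_ring_1 \<Rightarrow> 'b::comm_ring_1) \<Rightarrow> ('n::finite \<Rightarrow> 'b) \<Rightarrow> ('n, 'k) mpoly \<Rightarrow> 'b" where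
  "ev \<phi> h f = lin (\<lambda>u c. \<phi> c * (\<Prod>i\<in>UNIV. h i ^ Poly_Mapping.lookup u i)) f"

lemma ev_add: "hom \<phi> \<Longrightarrow> ev \<phi> h (p + q) = ev \<phi> h p + ev \<phi> h q"
  unfolding ev_def by (rule lin_add) (simp_all add: hom_zero hom_add distrib_right)

lemma ev_diff: "hom \<phi> \<Longrightarrow> ev \<phi> h (p - q) = ev \<phi> h p - ev \<phi> h q"
  unfolding ev_def by (rule lin_diff) (simp_all add: hom_zero hom_add distrib_right)

lemma ev_zero[simp]: "ev \<phi> h 0 = 0"
  unfolding ev_def by simp

lemma ev_single: "hom \<phi> \<Longrightarrow> ev \<phi> h (Poly_Mapping.single u c) = \<phi> c * (\<Prod>i\<in>UNIV. h i ^ Poly_Mapping.lookup u i)"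
  unfolding ev_def by (rule lin_single) (simp add: hom_zero)

lemma ev_mult_single:
  assumes "hom \<phi>"
  shows "ev \<phi> h (Poly_Mapping.single v a * q) = ev \<phi> h (Poly_Mapping.single v a) * ev \<phi> h q"
proof (induction q rule: mp_induct)
  case zero then show ?case by simp
next
  case (add u b f)
  have "ev \<phi> h (Poly_Mapping.single (v + u) (a * b)) = ev \<phi> h (Poly_Mapping.single v a) * ev \<phi> h (Poly_Mapping.single u b)"
    using assms by (simp add: ev_single hom_mult lookup_add power_add prod.distrib mult_ac)
  then show ?case
    using assms add by (simp add: distrib_left ev_add mult_single)
qed

lemma ev_mult:
  assumes "hom \<phi>"
  shows "ev \<phi> h (p * q) = ev \<phi> h p * ev \<phi> h q"
proof (induction p rule: mp_induct)
  case zero then show ?case by simp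
next
  case (add u b f)
  then show ?case
    using assms by (simp add: distrib_right ev_add ev_mult_single)
qed

lemma ev_one: "hom \<phi> \<Longrightarrow> ev \<phi> h (1::('n::finite, 'k::comm_ring_1) mpoly) = 1"
  using ev_single[of \<phi> h 0 1] by (simp add: hom_one)

lemma ev_comp:
  assumes s: "hom \<sigma>" and p: "hom \<phi>"
  shows "\<sigma> (ev \<phi> h f) = ev (\<sigma> \<circ> \<phi>) (\<sigma> \<circ> h) f"
proof -
  have h2: "hom (\<lambda>a. \<sigma> (\<phi> a))" using hom_comp[OF s p] by (simp add: comp_def)
  show ?thesis
  unfolding comp_def
proof (induction f rule: mp_induct)
  case zero then show ?case using hom_zero[OF s] by simp
next
  case (add u b f)
  then show ?case
    using s p by (simp add: ev_add[OF p] ev_add[OF h2] ev_single[OF p] ev_single[OF h2] hom_add hom_mult hom_prod hom_power)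
qed
qed

lemma ev_var: "hom \<phi> \<Longrightarrow> ev \<phi> h (var i) = h i"
proof -
  assume a: "hom \<phi>"
  have "(\<Prod>k\<in>UNIV. h k ^ Poly_Mapping.lookup (Poly_Mapping.single i 1) k) = (\<Prod>k\<in>UNIV. if k = i then h k else 1)"
    by (rule prod.cong) (auto simp: lookup_single when_def)
  then show ?thesis using a by (simp add: var_def ev_single hom_one)
qed

lemma ev_monom: "hom \<phi> \<Longrightarrow> ev \<phi> h (monom_of u) = (\<Prod>i\<in>UNIV. h i ^ u i)"
  by (simp add: monom_of_def ev_single hom_one)

definition kern :: "(('n::finite, 'k::comm_ring_1) mpoly \<Rightarrow> 'b::comm_ring_1) \<Rightarrow> ('n, 'k) mpoly set" where
  "kern \<psi> = {f. \<psi> f = 0}"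

lemma kern_prime:
  assumes "hom \<phi>"
  shows "prime_ideal (kern (ev \<phi> (h :: 'n::finite \<Rightarrow> 'b::idom)) :: ('n, 'k::comm_ring_1) mpoly set)"
  unfolding prime_ideal_def is_ideal_def kern_def
  using assms by (simp add: ev_add ev_mult ev_one)



lemma pos_neg_sum:
  assumes "(\<Sum>i\<in>UNIV. int (w i) * a i) = 0"
  shows "(\<Sum>i\<in>UNIV. w i * pos_part a i) = (\<Sum>i\<in>UNIV. w i * neg_part (a::'n::finite \<Rightarrow> int) i)"
proof -
  have "(\<Sum>i\<in>UNIV. int (w i * pos_part a i)) - (\<Sum>i\<in>UNIV. int (w i * neg_part a i)) = (\<Sum>i\<in>UNIV. int (w i) * a i)"
    by (simp add: sum_subtractf[symmetric] pos_part_def neg_part_def right_diff_distrib[symmetric]) (rule sum.cong, auto)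
  then have "int (\<Sum>i\<in>UNIV. w i * pos_part a i) = int (\<Sum>i\<in>UNIV. w i * neg_part a i)"
    using assms by (simp add: of_nat_sum)
  then show ?thesis by (simp only: of_nat_eq_iff)
qed

lemma chain2:
  fixes w :: "'n::finite \<Rightarrow> nat"
  assumes LH: "L \<subseteq> HH" and orth: "\<And>a. a \<in> L \<Longrightarrow> (\<Sum>i\<in>UNIV. int (w i) * a i) = 0"
    and ij: "w i \<noteq> w j"
  shows "prime_chain_over (lattice_ideal L :: ('n, 'k::field) mpoly set) 2"
proof -
  define X :: "'k poly poly" where "X = [:0, 1:]"
  define Yc :: "'k poly poly" where "Yc = [:[:0, 1:]:]"
  define \<phi>0 :: "'k \<Rightarrow> 'k poly poly" where "\<phi>0 = (\<lambda>c. [:[:c:]:])"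
  define h0 where "h0 = (\<lambda>i. X ^ w i * Yc)"
  define \<phi>1 :: "'k \<Rightarrow> 'k poly" where "\<phi>1 = (\<lambda>c. [:c:])"
  define h1 :: "'n \<Rightarrow> 'k poly" where "h1 = (\<lambda>i. [:0, 1:])"
  define \<phi>2 :: "'k \<Rightarrow> 'k" where "\<phi>2 = (\<lambda>c. c)"
  define h2 :: "'n \<Rightarrow> 'k" where "h2 = (\<lambda>i. 0)"
  have H0: "hom \<phi>0" unfolding \<phi>0_def using hom_comp[OF hom_const hom_const] by (simp add: comp_def)
  have H1: "hom \<phi>1" unfolding \<phi>1_def by (rule hom_const)
  have H2: "hom \<phi>2" unfolding \<phi>2_def hom_def by simp
  define K0 where "K0 = (kern (ev \<phi>0 h0) :: ('n, 'k) mpoly set)"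
  define K1 where "K1 = (kern (ev \<phi>1 h1) :: ('n, 'k) mpoly set)"
  define K2 where "K2 = (kern (ev \<phi>2 h2) :: ('n, 'k) mpoly set)"
  have P0: "prime_ideal K0" unfolding K0_def by (rule kern_prime[OF H0])
  have P1: "prime_ideal K1" unfolding K1_def by (rule kern_prime[OF H1])
  have P2: "prime_ideal K2" unfolding K2_def by (rule kern_prime[OF H2])
  have c01: "ev \<phi>1 h1 f = poly (ev \<phi>0 h0 f) 1" for f :: "('n, 'k) mpoly"
  proof -
    have "poly (ev \<phi>0 h0 f) 1 = ev ((\<lambda>p. poly p 1) \<circ> \<phi>0) ((\<lambda>p. poly p 1) \<circ> h0) f"
      by (rule ev_comp[OF hom_poly H0])
    moreover have "(\<lambda>p. poly p 1) \<circ> \<phi>0 = \<phi>1" by (auto simp: \<phi>0_def \<phi>1_def)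
    moreover have "(\<lambda>p. poly p 1) \<circ> h0 = h1" by (auto simp: h0_def h1_def X_def Yc_def poly_power)
    ultimately show ?thesis by simp
  qed
  have c12: "ev \<phi>2 h2 f = poly (ev \<phi>1 h1 f) 0" for f :: "('n, 'k) mpoly"
  proof -
    have "poly (ev \<phi>1 h1 f) 0 = ev ((\<lambda>p. poly p 0) \<circ> \<phi>1) ((\<lambda>p. poly p 0) \<circ> h1) f"
      by (rule ev_comp[OF hom_poly H1])
    moreover have "(\<lambda>p. poly p 0) \<circ> \<phi>1 = \<phi>2" by (auto simp: \<phi>2_def \<phi>1_def)
    moreover have "(\<lambda>p. poly p 0) \<circ> h1 = h2" by (auto simp: h2_def h1_def)
    ultimately show ?thesis by simp
  qed
  have S01: "K0 \<subseteq> K1" unfolding K0_def K1_def kern_def using c01 by auto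
  have S12: "K1 \<subseteq> K2" unfolding K2_def K1_def kern_def using c12 by auto
  have mon0: "ev \<phi>0 h0 (monom_of u) = X ^ (\<Sum>i\<in>UNIV. w i * u i) * Yc ^ (\<Sum>i\<in>UNIV. u i)" for u
    unfolding ev_monom[OF H0] h0_def
    by (simp add: power_mult_distrib power_mult[symmetric] prod.distrib power_sum)
  have IK0: "(lattice_ideal L :: ('n, 'k) mpoly set) \<subseteq> K0"
    unfolding lattice_ideal_gen
  proof (rule ideal_gen_min)
    show "is_ideal K0" using P0 by (simp add: prime_ideal_def)
    show "gen ` L \<subseteq> K0"
    proof
      fix g :: "('n, 'k) mpoly" assume "g \<in> gen ` L"
      then obtain a where a: "a \<in> L" "g = gen a" by blast
      have s1: "(\<Sum>i\<in>UNIV. w i * pos_part a i) = (\<Sum>i\<in>UNIV. w i * neg_part a i)"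
        by (rule pos_neg_sum[OF orth[OF a(1)]])
      have "(\<Sum>i\<in>UNIV. 1 * pos_part a i) = (\<Sum>i\<in>UNIV. 1 * neg_part a i)"
        by (rule pos_neg_sum) (use LH a(1) in \<open>auto simp: HH_def\<close>)
      then have s2: "(\<Sum>i\<in>UNIV. pos_part a i) = (\<Sum>i\<in>UNIV. neg_part a i)" by simp
      show "g \<in> K0" unfolding a(2) K0_def kern_def gen_def
        by (simp add: ev_diff[OF H0] mon0 s1 s2)
    qed
  qed
  have ne01: "var i - var j \<in> K1 - K0"
  proof -
    have "ev \<phi>1 h1 (var i - var j :: ('n, 'k) mpoly) = 0"
      by (simp add: ev_diff[OF H1] ev_var[OF H1] h1_def)
    moreover have "ev \<phi>0 h0 (var i - var j :: ('n, 'k) mpoly) \<noteq> 0"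
    proof -
      have "ev \<phi>0 h0 (var i - var j :: ('n, 'k) mpoly) = (X ^ w i - X ^ w j) * Yc"
        by (simp add: ev_diff[OF H0] ev_var[OF H0] h0_def algebra_simps)
      moreover have "Yc \<noteq> 0" by (simp add: Yc_def)
      moreover have "X ^ w i \<noteq> X ^ w j"
      proof
        assume "X ^ w i = X ^ w j"
        then have "degree (X ^ w i) = degree (X ^ w j)" by simp
        then show False using ij by (simp add: X_def degree_power_eq)
      qed
      ultimately show ?thesis by simp
    qed
    ultimately show ?thesis unfolding K0_def K1_def kern_def by simp
  qed
  have ne12: "var i \<in> K2 - K1"
  proof -
    have "ev \<phi>2 h2 (var i :: ('n, 'k) mpoly) = 0" by (simp add: ev_var[OF H2] h2_def)
    moreover have "ev \<phi>1 h1 (var i :: ('n, 'k) mpoly) \<noteq> 0" by (simp add: ev_var[OF H1] h1_def)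
    ultimately show ?thesis unfolding K2_def K1_def kern_def by simp
  qed
  define P where "P = (\<lambda>n::nat. if n = 0 then K0 else if n = 1 then K1 else K2)"
  have A: "\<forall>n\<le>2. prime_ideal (P n) \<and> (lattice_ideal L :: ('n, 'k) mpoly set) \<subseteq> P n"
  proof (intro allI impI)
    fix n :: nat assume "n \<le> 2"
    then have "n = 0 \<or> n = 1 \<or> n = 2" by auto
    then show "prime_ideal (P n) \<and> (lattice_ideal L :: ('n, 'k) mpoly set) \<subseteq> P n"
      using P0 P1 P2 IK0 S01 S12 by (auto simp: P_def)
  qed
  have B: "\<forall>n<2. P n \<subset> P (Suc n)"
  proof (intro allI impI)
    fix n :: nat assume "n < 2"
    then have "n = 0 \<or> n = 1" by auto
    then show "P n \<subset> P (Suc n)"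
      using S01 S12 ne01 ne12 by (auto simp: P_def)
  qed
  show ?thesis unfolding prime_chain_over_def using A B by blast
qed



lemma sum_fun_apply: "(sum f A) i = sum (\<lambda>x. f x i) A"
  by (induction A rule: infinite_finite_induct) auto

definition sc :: "rat \<Rightarrow> ('n \<Rightarrow> rat) \<Rightarrow> ('n \<Rightarrow> rat)" where
  "sc c x = (\<lambda>i. c * x i)"

lemma vs_sc: "vector_space sc"
  by unfold_locales (auto simp: sc_def fun_eq_iff algebra_simps)

lemma vs_rat: "vector_space ((*) :: rat \<Rightarrow> rat \<Rightarrow> rat)"
  by unfold_locales (auto simp: algebra_simps)

lemma rat_denom: "\<exists>d::int. d > 0 \<and> of_int d * (x::rat) \<in> \<int>"
proof -
  obtain p d where pd: "quotient_of x = (p, d)" by (cases "quotient_of x")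
  have "d > 0" by (rule quotient_of_denom_pos[OF pd])
  moreover have "of_int d * x = of_int p" using quotient_of_div[OF pd] \<open>d > 0\<close> by simp
  ultimately show ?thesis by (intro exI[of _ d]) auto
qed

lemma common_denom:
  assumes "finite T"
  shows "\<exists>D::int. D > 0 \<and> (\<forall>v\<in>T. of_int D * (r v :: rat) \<in> \<int>)"
  using assms
proof (induction T rule: finite_induct)
  case empty then show ?case by (intro exI[of _ 1]) auto
next
  case (insert x F)
  then obtain D where D: "D > 0" "\<forall>v\<in>F. of_int D * r v \<in> \<int>" by blast
  obtain d where d: "d > 0" "of_int d * r x \<in> \<int>" using rat_denom by blast
  have "of_int (D * d) * r v \<in> \<int>" if "v \<in> insert x F" for v
  proof (cases "v = x")
    case True
    have "of_int (D * d) * r v = of_int D * (of_int d * r x)" by (simp add: True mult.assoc)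
    then show ?thesis using d(2) by (metis Ints_mult Ints_of_int)
  next
    case False
    then have "v \<in> F" using that by simp
    have "of_int (D * d) * r v = of_int d * (of_int D * r v)" by (simp add: mult_ac)
    then show ?thesis using D(2) \<open>v \<in> F\<close> by (metis Ints_mult Ints_of_int)
  qed
  then show ?case using D(1) d(1) by (intro exI[of _ "D * d"]) auto
qed

lemma separate:
  fixes L :: "('n::finite \<Rightarrow> int) set"
  assumes L: "is_lattice L" and tf: "torsion_free_quot L" and b: "b \<notin> L"
  shows "\<exists>w::'n \<Rightarrow> int. (\<forall>a\<in>L. (\<Sum>i\<in>UNIV. w i * a i) = 0) \<and> (\<Sum>i\<in>UNIV. w i * b i) \<noteq> 0"
proof -
  interpret V: vector_space "sc :: rat \<Rightarrow> ('n \<Rightarrow> rat) \<Rightarrow> _" by (rule vs_sc)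
  interpret R: vector_space "(*) :: rat \<Rightarrow> rat \<Rightarrow> rat" by (rule vs_rat)
  interpret P: vector_space_pair "sc :: rat \<Rightarrow> ('n \<Rightarrow> rat) \<Rightarrow> _" "(*) :: rat \<Rightarrow> rat \<Rightarrow> rat" ..
  define q :: "('n \<Rightarrow> int) \<Rightarrow> 'n \<Rightarrow> rat" where "q = (\<lambda>a i. of_int (a i))"
  define Lq where "Lq = q ` L"
  define bq where "bq = q b"
  have nspan: "bq \<notin> V.span Lq"
  proof
    assume "bq \<in> V.span Lq"
    then obtain t r where t: "finite t" "t \<subseteq> Lq" and bt: "(\<Sum>v\<in>t. sc (r v) v) = bq"
      unfolding V.span_explicit by blast
    obtain D where D: "D > 0" "\<forall>v\<in>t. of_int D * r v \<in> \<int>" using common_denom[OF t(1)] by blast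
    have "\<forall>v\<in>t. \<exists>a\<in>L. v = q a" using t(2) by (auto simp: Lq_def)
    then obtain f where f: "\<And>v. v \<in> t \<Longrightarrow> f v \<in> L \<and> v = q (f v)" by metis
    have "\<forall>v\<in>t. \<exists>c::int. of_int c = of_int D * r v" using D(2) by (metis Ints_cases)
    then obtain c where c: "\<And>v. v \<in> t \<Longrightarrow> of_int (c v) = of_int D * r v" by metis
    have inL: "(\<lambda>i. \<Sum>v\<in>t. c v * f v i) \<in> L"
      by (rule lat_sum[OF L t(1)], rule lat_smult[OF L]) (use f in blast)
    have "(\<lambda>i. \<Sum>v\<in>t. c v * f v i) = (\<lambda>i. D * b i)"
    proof
      fix i
      have e1: "of_int (c v * f v i) = of_int D * (r v * v i)" if v: "v \<in> t" for v
      proof -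
        have vi: "v i = of_int (f v i)" using fun_cong[OF conjunct2[OF f[OF v]], of i] unfolding q_def .
        have "(of_int (c v * f v i) :: rat) = of_int (c v) * of_int (f v i)" by (rule of_int_mult)
        also have "\<dots> = (of_int D * r v) * v i" by (simp only: c[OF v] vi)
        also have "\<dots> = of_int D * (r v * v i)" by (rule mult.assoc)
        finally show ?thesis .
      qed
      have "(of_int (\<Sum>v\<in>t. c v * f v i) :: rat) = (\<Sum>v\<in>t. of_int (c v * f v i))"
        by (rule of_int_sum)
      also have "\<dots> = (\<Sum>v\<in>t. of_int D * (r v * v i))" by (rule sum.cong) (use e1 in auto)
      also have "\<dots> = of_int D * (\<Sum>v\<in>t. sc (r v) v) i"
        by (simp add: sum_fun_apply sum_distrib_left sc_def)
      also have "\<dots> = (of_int (D * b i) :: rat)" using bt by (simp add: bq_def q_def)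
      finally show "(\<Sum>v\<in>t. c v * f v i) = D * b i" by (simp only: of_int_eq_iff)
    qed
    then have "(\<lambda>i. D * b i) \<in> L" using inL by simp
    then have "b \<in> L" using tf[unfolded torsion_free_quot_def, rule_format, of D b] D(1) by simp
    then show False using b by simp
  qed
  obtain B0 where B0: "B0 \<subseteq> Lq" "V.independent B0" "Lq \<subseteq> V.span B0"
    by (rule V.maximal_independent_subset)
  have sB0: "V.span B0 \<subseteq> V.span Lq" using B0(1) by (rule V.span_mono)
  have nB: "bq \<notin> V.span B0" using nspan sB0 by blast
  then have bB: "bq \<notin> B0" using V.span_base by blast
  have indep: "V.independent (insert bq B0)" by (rule V.independent_insertI[OF nB B0(2)])
  define g where "g = P.construct (insert bq B0) (\<lambda>x. if x = bq then 1 else 0)"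
  have lin: "Vector_Spaces.linear sc (*) g" unfolding g_def by (rule P.linear_construct[OF indep])
  interpret G: Vector_Spaces.linear sc "(*) :: rat \<Rightarrow> rat \<Rightarrow> rat" g by (rule lin)
  have gb: "g bq = 1" unfolding g_def by (subst P.construct_basis[OF indep]) auto
  have g0: "g x = 0" if "x \<in> B0" for x
    unfolding g_def using that bB by (subst P.construct_basis[OF indep]) auto
  have gL: "g (q a) = 0" if "a \<in> L" for a
    by (rule G.eq_0_on_span[OF g0]) (use B0(3) that in \<open>auto simp: Lq_def\<close>)
  define e :: "'n \<Rightarrow> 'n \<Rightarrow> rat" where "e = (\<lambda>i j. if j = i then 1 else 0)"
  have gx: "g x = (\<Sum>i\<in>UNIV. x i * g (e i))" for x
  proof -
    have "x = (\<Sum>i\<in>UNIV. sc (x i) (e i))"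
    proof
      fix j
      have "(\<Sum>i\<in>UNIV. sc (x i) (e i)) j = (\<Sum>i\<in>UNIV. if i = j then x j else 0)"
        unfolding sum_fun_apply sc_def e_def by (rule sum.cong) auto
      then show "x j = (\<Sum>i\<in>UNIV. sc (x i) (e i)) j" by simp
    qed
    then have "g x = g (\<Sum>i\<in>UNIV. sc (x i) (e i))" by (rule arg_cong)
    also have "\<dots> = (\<Sum>i\<in>UNIV. x i * g (e i))" by (simp add: G.sum G.scale)
    finally show ?thesis .
  qed
  have "\<exists>D::int. D > 0 \<and> (\<forall>i\<in>(UNIV::'n set). of_int D * g (e i) \<in> \<int>)"
    by (rule common_denom) simp
  then obtain D where D: "D > 0" "\<forall>i\<in>UNIV. of_int D * g (e i) \<in> \<int>" by blast
  have "\<forall>i. \<exists>c::int. of_int c = of_int D * g (e i)"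
  proof
    fix i
    have "of_int D * g (e i) \<in> \<int>" using D(2) by blast
    then show "\<exists>c::int. of_int c = of_int D * g (e i)" by (metis Ints_cases)
  qed
  then obtain w where w: "\<And>i. of_int (w i) = of_int D * g (e i)" by metis
  have key: "of_int (\<Sum>i\<in>UNIV. w i * a i) = of_int D * g (q a)" for a
  proof -
    have "of_int D * g (q a) = of_int D * (\<Sum>i\<in>UNIV. q a i * g (e i))" by (simp only: gx[of "q a"])
    also have "\<dots> = (\<Sum>i\<in>UNIV. of_int (w i * a i))"
      unfolding sum_distrib_left
    proof (rule sum.cong)
      fix i :: 'n
      have "(of_int (w i * a i) :: rat) = of_int (w i) * of_int (a i)" by (rule of_int_mult)
      also have "\<dots> = (of_int D * g (e i)) * of_int (a i)" by (simp only: w)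
      also have "\<dots> = of_int D * (q a i * g (e i))" unfolding q_def by (simp only: ac_simps)
      finally show "of_int D * (q a i * g (e i)) = (of_int (w i * a i) :: rat)" by (rule sym)
    qed simp
    also have "\<dots> = of_int (\<Sum>i\<in>UNIV. w i * a i)" by (rule of_int_sum[symmetric])
    finally show ?thesis by (rule sym)
  qed
  have w1: "\<forall>a\<in>L. (\<Sum>i\<in>UNIV. w i * a i) = 0"
  proof
    fix a assume a: "a \<in> L"
    have "(of_int (\<Sum>i\<in>UNIV. w i * a i) :: rat) = of_int D * g (q a)" by (rule key)
    also have "\<dots> = 0" using gL[OF a] by simp
    finally show "(\<Sum>i\<in>UNIV. w i * a i) = 0" by (simp only: of_int_eq_0_iff)
  qed
  have "(of_int (\<Sum>i\<in>UNIV. w i * b i) :: rat) = of_int D * g (q b)" by (rule key)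
  also have "\<dots> = of_int D" using gb by (simp add: bq_def)
  finally have "(\<Sum>i\<in>UNIV. w i * b i) = D" by (simp only: of_int_eq_iff)
  then have w2: "(\<Sum>i\<in>UNIV. w i * b i) \<noteq> 0" using D(1) by simp
  show ?thesis using w1 w2 by blast
qed



lemma shift_w:
  fixes w :: "'n::finite \<Rightarrow> int"
  assumes L: "L \<subseteq> HH" and wL: "\<forall>a\<in>L. (\<Sum>i\<in>UNIV. w i * a i) = 0" and b: "b \<in> HH"
    and wb: "(\<Sum>i\<in>UNIV. w i * b i) \<noteq> 0"
  shows "\<exists>w'::'n \<Rightarrow> nat. (\<forall>a\<in>L. (\<Sum>i\<in>UNIV. int (w' i) * a i) = 0) \<and> (\<exists>i j. w' i \<noteq> w' j)"
proof -
  define C where "C = (\<Sum>i\<in>UNIV. \<bar>w i\<bar>)"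
  have le: "\<bar>w i\<bar> \<le> C" for i unfolding C_def by (rule member_le_sum) auto
  define w' where "w' = (\<lambda>i. nat (w i + C))"
  have iw: "int (w' i) = w i + C" for i using le[of i] by (simp add: w'_def)
  have sh: "(\<Sum>i\<in>UNIV. int (w' i) * a i) = (\<Sum>i\<in>UNIV. w i * a i)" if "a \<in> HH" for a
  proof -
    have "(\<Sum>i\<in>UNIV. int (w' i) * a i) = (\<Sum>i\<in>UNIV. w i * a i + C * a i)"
      by (rule sum.cong) (simp_all add: iw distrib_right)
    also have "\<dots> = (\<Sum>i\<in>UNIV. w i * a i) + (\<Sum>i\<in>UNIV. C * a i)" by (rule sum.distrib)
    also have "(\<Sum>i\<in>UNIV. C * a i) = C * (\<Sum>i\<in>UNIV. a i)" by (rule sum_distrib_left[symmetric])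
    finally have "(\<Sum>i\<in>UNIV. int (w' i) * a i) = (\<Sum>i\<in>UNIV. w i * a i) + C * (\<Sum>i\<in>UNIV. a i)" .
    then show ?thesis using that by (simp add: HH_def)
  qed
  have "\<exists>i j. w' i \<noteq> w' j"
  proof (rule ccontr)
    assume "\<not> (\<exists>i j. w' i \<noteq> w' j)"
    then have c: "w' i = w' undefined" for i by blast
    have "(\<Sum>i\<in>UNIV. int (w' i) * b i) = (\<Sum>i\<in>UNIV. int (w' undefined) * b i)"
      by (intro sum.cong refl) (metis c)
    also have "\<dots> = int (w' undefined) * (\<Sum>i\<in>UNIV. b i)" by (rule sum_distrib_left[symmetric])
    finally have "(\<Sum>i\<in>UNIV. int (w' i) * b i) = int (w' undefined) * (\<Sum>i\<in>UNIV. b i)" .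
    then have "(\<Sum>i\<in>UNIV. int (w' i) * b i) = 0" using b by (simp add: HH_def)
    then show False using sh[OF b] wb by simp
  qed
  moreover have "\<forall>a\<in>L. (\<Sum>i\<in>UNIV. int (w' i) * a i) = 0" using sh wL L by auto
  ultimately show ?thesis by blast
qed

theorem corollary3p20:
  fixes L :: "('n::finite \<Rightarrow> int) set" and s_last :: 'n
  assumes "CARD('n) \<ge> 2"
    and "is_lattice L"
    and "graded_ideal (lattice_ideal L :: ('n, 'k::field) mpoly set)"
    and "krull_dim_quot_eq (lattice_ideal L :: ('n, 'k) mpoly set) 1"
  shows "torsion_free_quot L \<longleftrightarrow>
    (lattice_ideal L :: ('n, 'k) mpoly set) = ideal_gen {var i - var s_last | i. i \<noteq> s_last}"
proof
  have LH: "L \<subseteq> HH" by (rule graded_sub[OF assms(2) assms(3)])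
  assume tf: "torsion_free_quot L"
  have "L = HH"
  proof (rule ccontr)
    assume "L \<noteq> HH"
    then obtain b where b: "b \<in> HH" "b \<notin> L" using LH by blast
    obtain w where w: "\<forall>a\<in>L. (\<Sum>i\<in>UNIV. w i * a i) = 0" "(\<Sum>i\<in>UNIV. w i * b i) \<noteq> 0"
      using separate[OF assms(2) tf b(2)] by blast
    obtain w' :: "'n \<Rightarrow> nat" where w': "\<forall>a\<in>L. (\<Sum>i\<in>UNIV. int (w' i) * a i) = 0" "\<exists>i j. w' i \<noteq> w' j"
      using shift_w[OF LH w(1) b(1) w(2)] by blast
    obtain i j where ij: "w' i \<noteq> w' j" using w'(2) by blast
    have "prime_chain_over (lattice_ideal L :: ('n, 'k) mpoly set) 2"
      by (rule chain2[OF LH _ ij]) (use w'(1) in blast)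
    moreover have "\<not> prime_chain_over (lattice_ideal L :: ('n, 'k) mpoly set) (Suc 1)"
      using assms(4) unfolding krull_dim_quot_eq_def by blast
    ultimately show False by (simp add: numeral_2_eq_2)
  qed
  then show "(lattice_ideal L :: ('n, 'k) mpoly set) = ideal_gen {var i - var s_last | i. i \<noteq> s_last}"
    using lattice_ideal_HH[of s_last] by (simp add: Jv_def)
next
  assume "(lattice_ideal L :: ('n, 'k) mpoly set) = ideal_gen {var i - var s_last | i. i \<noteq> s_last}"
  then have "(lattice_ideal L :: ('n, 'k) mpoly set) = Jv s_last" by (simp add: Jv_def)
  then show "torsion_free_quot L" by (rule dir2[OF assms(2)])
qed


end
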